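(* Let $\lambda,\delta\in\partial\mathbb D$, $a\in\mathbb D$, and $F=H+\overline G\in\mathcal F^a_{\lambda,\delta}$. If $F$ is locally one-to-one and sense-preserving on $\mathbb D$, then $F$ is a convex harmonic mapping, i.e. $F$ is univalent on $\mathbb D$ and $F(\mathbb D)$ is convex.
   Context: $\mathbb D$ is the open unit disk. $\mathcal H$ is the set of harmonic $f=h+\overline g$ on $\mathbb D$ ($h,g$ analytic) with $h(0)=g(0)=0$, $h'(0)=1$; $f$ is locally one-to-one and sense-preserving iff $|h'|>|g'|$ on $\mathbb D$. For $\lambda,\delta\in\partial\mathbb D$ and $a\in\mathbb D$, with $a'=|1+a|-1$ and $\gamma_a=\arg(1+\overline a)$, $\mathcal F^a_{\lambda,\delta}$ is the set of $F=H+\overline G\in\mathcal H$ with $H'(z)+\overline{\delta^2}e^{-2i\gamma_a}G'(z)=\frac{1+a'}{(1+\lambda\delta e^{i\gamma_a}z)(1+\overline\lambda\delta e^{i\gamma_a}z)}$ on $\mathbb D$. *)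

theory Defs
  imports "HOL-Complex_Analysis.Complex_Analysis"
begin

definition in_class_H :: "(complex \<Rightarrow> complex) \<Rightarrow> (complex \<Rightarrow> complex) \<Rightarrow> bool" where
  "in_class_H h g \<longleftrightarrow> h holomorphic_on ball 0 1 \<and> g holomorphic_on ball 0 1 \<and>
     h 0 = 0 \<and> g 0 = 0 \<and> deriv h 0 = 1"

definition harm :: "(complex \<Rightarrow> complex) \<Rightarrow> (complex \<Rightarrow> complex) \<Rightarrow> complex \<Rightarrow> complex" where
  "harm h g = (\<lambda>z. h z + cnj (g z))"

text \<open>Locally one-to-one and sense-preserving on the disk (Lewy/Jacobian criterion |h'| > |g'|).\<close>
definition locally_univalent_sense_preserving ::
    "(complex \<Rightarrow> complex) \<Rightarrow> (complex \<Rightarrow> complex) \<Rightarrow> bool" where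
  "locally_univalent_sense_preserving h g \<longleftrightarrow> (\<forall>z\<in>ball 0 1. norm (deriv g z) < norm (deriv h z))"

definition family_F :: "complex \<Rightarrow> complex \<Rightarrow> complex \<Rightarrow>
    (complex \<Rightarrow> complex) \<Rightarrow> (complex \<Rightarrow> complex) \<Rightarrow> bool" where
  "family_F a lam \<delta> H G \<longleftrightarrow> in_class_H H G \<and>
     (let a' = norm (1 + a) - 1; \<gamma> = Arg (1 + cnj a) in
      \<forall>z\<in>ball 0 1. deriv H z + cnj (\<delta>^2) * exp (- 2 * \<i> * of_real \<gamma>) * deriv G z =
        of_real (1 + a') /
          ((1 + lam * \<delta> * exp (\<i> * of_real \<gamma>) * z) * (1 + cnj lam * \<delta> * exp (\<i> * of_real \<gamma>) * z)))"

end

theory Submission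
  imports Defs
begin

lemma norm_diff_lt_sum_cnj:
  fixes a b :: complex
  assumes "Re a > 0" "Re b > 0"
  shows "norm (a - b) < norm (a + cnj b)"
proof -
  have "(norm (a - b))^2 < (norm (a + cnj b))^2"
    unfolding cmod_power2 using assms by (simp add: power2_eq_square algebra_simps)
  thus ?thesis by (simp add: power_less_imp_less_base)
qed

lemma schwarz_est:
  fixes g :: "complex \<Rightarrow> complex"
  assumes hol: "g holomorphic_on ball p r" and r: "r > 0"
    and pos: "\<And>z. z \<in> ball p r \<Longrightarrow> Re (g z) > 0"
    and \<zeta>: "norm (\<zeta> - p) \<le> r / 2"
  shows "norm (g \<zeta> - g p) \<le> 2 * Re (g p)"
proof -
  define f where "f = (\<lambda>z. (g (p + of_real r * z) - g p) / (g (p + of_real r * z) + cnj (g p)))"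
  have inball: "p + of_real r * z \<in> ball p r" if "norm z < 1" for z
    using that r by (simp add: dist_norm norm_mult)
  have den: "g (p + of_real r * z) + cnj (g p) \<noteq> 0" if "norm z < 1" for z
  proof -
    have "Re (g (p + of_real r * z) + cnj (g p)) > 0"
      using pos[OF inball[OF that]] pos[of p] r by simp
    thus ?thesis by (metis less_irrefl zero_complex.sel(1))
  qed
  have holf: "f holomorphic_on ball 0 1"
    unfolding f_def
  proof (intro holomorphic_intros)
    show "(\<lambda>z. g (p + of_real r * z)) holomorphic_on ball 0 1"
      by (rule holomorphic_on_compose_gen[unfolded o_def, OF _ hol])
         (use r in \<open>auto intro!: holomorphic_intros simp: dist_norm norm_mult\<close>)
    thus "(\<lambda>z. g (p + of_real r * z)) holomorphic_on ball 0 1" .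
    show "\<And>z. z \<in> ball 0 1 \<Longrightarrow> g (p + of_real r * z) + cnj (g p) \<noteq> 0"
      using den by auto
  qed
  have f0: "f 0 = 0" by (simp add: f_def)
  have no: "norm (f z) < 1" if "norm z < 1" for z
  proof -
    have "norm (g (p + of_real r * z) - g p) < norm (g (p + of_real r * z) + cnj (g p))"
      by (rule norm_diff_lt_sum_cnj) (use pos[OF inball[OF that]] pos[of p] r in auto)
    thus ?thesis using den[OF that] by (simp add: f_def norm_divide divide_less_eq)
  qed
  define \<xi> where "\<xi> = (\<zeta> - p) / of_real r"
  have xi: "norm \<xi> \<le> 1/2" using \<zeta> r by (simp add: \<xi>_def norm_divide divide_le_eq)
  have z_eq: "p + of_real r * \<xi> = \<zeta>" using r by (simp add: \<xi>_def)
  have "norm (f \<xi>) \<le> norm \<xi>"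
    by (rule Schwarz_Lemma(1)[OF holf f0 no]) (use xi in auto)
  hence "norm (g \<zeta> - g p) \<le> norm \<xi> * norm (g \<zeta> + cnj (g p))"
    using den[of \<xi>] xi by (simp add: f_def z_eq norm_divide divide_le_eq)
  also have "\<dots> \<le> 1/2 * (norm (g \<zeta> - g p) + 2 * Re (g p))"
  proof (rule mult_mono)
    have "g \<zeta> + cnj (g p) = (g \<zeta> - g p) + (g p + cnj (g p))" by simp
    also have "norm \<dots> \<le> norm (g \<zeta> - g p) + norm (g p + cnj (g p))" by (rule norm_triangle_ineq)
    also have "g p + cnj (g p) = of_real (2 * Re (g p))" by (simp add: complex_add_cnj)
    also have "norm (of_real (2 * Re (g p)) :: complex) = 2 * Re (g p)"
      using pos[of p] r by simp
    finally show "norm (g \<zeta> + cnj (g p)) \<le> norm (g \<zeta> - g p) + 2 * Re (g p)" .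
  qed (use xi pos[of p] r in auto)
  finally show ?thesis by simp
qed

lemma chain_est:
  fixes g :: "complex \<Rightarrow> complex"
  assumes hol: "g holomorphic_on \<Omega>" and pos: "\<And>z. z \<in> \<Omega> \<Longrightarrow> Re (g z) > 0"
    and r: "r > 0" and lohi: "lo \<le> 0" "0 \<le> hi"
    and balls: "\<And>\<tau>. lo \<le> \<tau> \<Longrightarrow> \<tau> \<le> hi \<Longrightarrow> ball (p + of_real \<tau>) r \<subseteq> \<Omega>"
  shows "lo \<le> \<tau> \<Longrightarrow> \<tau> \<le> hi \<Longrightarrow> \<bar>\<tau>\<bar> \<le> real n * r / 2 \<Longrightarrow>
     norm (g (p + of_real \<tau>) - g p) \<le> (3^n - 1) * Re (g p) \<and> Re (g (p + of_real \<tau>)) \<le> 3^n * Re (g p)"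
proof (induction n arbitrary: \<tau>)
  case 0
  then show ?case by simp
next
  case (Suc n)
  define \<tau>' where "\<tau>' = \<tau> * real n / (real n + 1)"
  have fr: "0 \<le> real n / (real n + 1)" "real n / (real n + 1) \<le> 1" by (auto simp: field_simps)
  have t1: "lo \<le> \<tau>'" "\<tau>' \<le> hi"
  proof -
    have "lo \<le> \<tau>'"
    proof (cases "\<tau> \<ge> 0")
      case True then show ?thesis using lohi fr unfolding \<tau>'_def
        apply (simp add: field_simps)
        using mult_nonpos_nonneg[of lo "real n"] mult_nonneg_nonneg[of \<tau> "real n"] by linarith
    next
      case False
      have "\<tau> * real n / (real n + 1) \<ge> \<tau> * 1" using False fr
        by (metis mult_le_cancel_left_neg times_divide_eq_right linorder_not_le)
      thus ?thesis using Suc.prems unfolding \<tau>'_def by simp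
    qed
    moreover have "\<tau>' \<le> hi"
    proof (cases "\<tau> \<ge> 0")
      case True
      have "\<tau> * real n / (real n + 1) \<le> \<tau> * 1" using True fr
        by (metis mult_left_mono times_divide_eq_right)
      thus ?thesis using Suc.prems unfolding \<tau>'_def by simp
    next
      case False then show ?thesis using lohi fr unfolding \<tau>'_def
        apply (simp add: field_simps)
        using mult_nonneg_nonneg[of hi "real n"] mult_nonpos_nonneg[of \<tau> "real n"] by linarith
    qed
    ultimately show "lo \<le> \<tau>'" "\<tau>' \<le> hi" by auto
  qed
  have t2: "\<bar>\<tau>'\<bar> \<le> real n * r / 2"
  proof -
    have "\<bar>\<tau>'\<bar> = \<bar>\<tau>\<bar> * real n / (real n + 1)" by (simp add: \<tau>'_def abs_mult)
    also have "\<dots> \<le> (real (Suc n) * r / 2) * real n / (real n + 1)"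
      using Suc.prems(3) by (intro divide_right_mono mult_right_mono) auto
    also have "\<dots> = real n * r / 2" by (simp add: field_simps)
    finally show ?thesis .
  qed
  have t3: "\<bar>\<tau> - \<tau>'\<bar> \<le> r / 2"
  proof -
    have "\<tau> - \<tau>' = \<tau> / (real n + 1)" by (simp add: \<tau>'_def field_simps)
    hence "\<bar>\<tau> - \<tau>'\<bar> = \<bar>\<tau>\<bar> / (real n + 1)" by simp
    also have "\<dots> \<le> (real (Suc n) * r / 2) / (real n + 1)"
      using Suc.prems(3) by (intro divide_right_mono) auto
    also have "\<dots> = r / 2" by (simp add: field_simps)
    finally show ?thesis .
  qed
  note IH = Suc.IH[OF t1 t2]
  define c where "c = p + of_real \<tau>'"
  have bc: "ball c r \<subseteq> \<Omega>" using balls[OF t1] by (simp add: c_def)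
  have se: "norm (g (p + of_real \<tau>) - g c) \<le> 2 * Re (g c)"
  proof (rule schwarz_est[OF holomorphic_on_subset[OF hol bc] r])
    show "\<And>z. z \<in> ball c r \<Longrightarrow> 0 < Re (g z)" using pos bc by auto
    have "p + of_real \<tau> - c = of_real (\<tau> - \<tau>')" by (simp add: c_def)
    thus "norm (p + of_real \<tau> - c) \<le> r / 2" using t3 by (metis norm_of_real)
  qed
  have gp: "Re (g p) \<ge> 0"
  proof -
    have "p \<in> ball (p + of_real 0) r" using r by simp
    hence "p \<in> \<Omega>" using balls[of 0] lohi by blast
    thus ?thesis using pos by (simp add: less_imp_le)
  qed
  have a: "norm (g (p + of_real \<tau>) - g p) \<le> norm (g (p + of_real \<tau>) - g c) + norm (g c - g p)"
    by (rule norm_diff_triangle_le[of _ "g c"]) auto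
  have b: "Re (g (p + of_real \<tau>)) \<le> Re (g c) + norm (g (p + of_real \<tau>) - g c)"
    using complex_Re_le_cmod[of "g (p + of_real \<tau>) - g c"] by simp
  show ?case using a b se IH unfolding c_def by (auto simp: algebra_simps)
qed


definition shearT :: "(complex \<Rightarrow> complex) \<Rightarrow> complex \<Rightarrow> complex" where
  "shearT \<Psi> w = of_real (Re w) + \<i> * of_real (Im (\<Psi> w))"

lemma conv_between:
  fixes a b t :: real
  assumes "0 \<le> t" "t \<le> 1"
  shows "min a b \<le> (1-t)*a + t*b \<and> (1-t)*a + t*b \<le> max a b"
proof -
  have e: "(1-t)*a + t*b = a + t*(b-a)" by (simp add: algebra_simps)
  show ?thesis
  proof (cases "a \<le> b")
    case True
    have "0 \<le> t*(b-a)" using assms True by auto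
    moreover have "t*(b-a) \<le> 1*(b-a)" using assms True by (intro mult_right_mono) auto
    ultimately show ?thesis using True e by auto
  next
    case False
    have "t*(b-a) \<le> 0" using assms False by (auto intro: mult_nonneg_nonpos)
    moreover have "(1-t)*(b-a) \<le> 0" using assms False by (intro mult_nonneg_nonpos) auto
    ultimately show ?thesis using False e unfolding min_def max_def by (auto simp: algebra_simps)
  qed
qed

context
  fixes \<Omega> :: "complex set" and \<Psi> :: "complex \<Rightarrow> complex"
  assumes opn: "open \<Omega>" and cvx: "convex \<Omega>"
    and vi: "\<And>w s. w \<in> \<Omega> \<Longrightarrow> w + \<i> * of_real s \<in> \<Omega>"
    and hol: "\<Psi> holomorphic_on \<Omega>"
    and pos: "\<And>w. w \<in> \<Omega> \<Longrightarrow> Re (deriv \<Psi> w) > 0"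
begin

lemma vderiv:
  assumes w: "w \<in> \<Omega>"
  shows "((\<lambda>s. Im (\<Psi> (w + \<i> * of_real s))) has_real_derivative Re (deriv \<Psi> (w + \<i> * of_real s))) (at s)"
proof -
  have d1: "((\<lambda>s. w + \<i> * of_real s) has_vector_derivative \<i>) (at s)"
    by (auto intro!: derivative_eq_intros simp: has_vector_derivative_def scaleR_conv_of_real)
  have d2: "(\<Psi> has_field_derivative deriv \<Psi> (w + \<i> * of_real s)) (at (w + \<i> * of_real s))"
    using holomorphic_derivI[OF hol opn vi[OF w]] .
  have "((\<Psi> \<circ> (\<lambda>s. w + \<i> * of_real s)) has_vector_derivative (\<i> * deriv \<Psi> (w + \<i> * of_real s))) (at s)"
    by (rule field_vector_diff_chain_at[OF d1 d2])
  from has_field_derivative_Im[OF this] show ?thesis by (simp add: o_def)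
qed

lemma vmono:
  assumes w: "w \<in> \<Omega>" and "s < s'"
  shows "Im (\<Psi> (w + \<i> * of_real s)) < Im (\<Psi> (w + \<i> * of_real s'))"
  using assms(2)
proof (rule DERIV_pos_imp_increasing)
  fix x show "\<exists>y. ((\<lambda>s. Im (\<Psi> (w + \<i> * of_real s))) has_real_derivative y) (at x) \<and> 0 < y"
    using vderiv[OF w] pos[OF vi[OF w]] by blast
qed

lemma vmono_le:
  assumes w: "w \<in> \<Omega>" and "s \<le> s'"
  shows "Im (\<Psi> (w + \<i> * of_real s)) \<le> Im (\<Psi> (w + \<i> * of_real s'))"
  using vmono[OF w, of s s'] assms(2) by (cases "s = s'") auto

lemma vcont: 
  assumes w: "w \<in> \<Omega>" shows "continuous_on A (\<lambda>s. Im (\<Psi> (w + \<i> * of_real s)))"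
proof (intro continuous_at_imp_continuous_on ballI)
  fix x show "isCont (\<lambda>s. Im (\<Psi> (w + \<i> * of_real s))) x"
    using DERIV_isCont[OF vderiv[OF w]] .
qed

lemma vstrict:
  assumes a: "a \<in> \<Omega>" and re: "Re a = Re b" and lt: "Im a < Im b"
  shows "Im (\<Psi> a) < Im (\<Psi> b)"
proof -
  have be: "a + \<i> * of_real (Im b - Im a) = b" using re by (simp add: complex_eq_iff)
  have "Im (\<Psi> (a + \<i> * of_real 0)) < Im (\<Psi> (a + \<i> * of_real (Im b - Im a)))"
    by (rule vmono[OF a]) (use lt in simp)
  thus ?thesis by (simp only: be) simp
qed

lemma T_inj: "inj_on (shearT \<Psi>) \<Omega>"
proof (rule inj_onI)
  fix w1 w2 assume w: "w1 \<in> \<Omega>" "w2 \<in> \<Omega>" and eq: "shearT \<Psi> w1 = shearT \<Psi> w2"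
  hence re: "Re w1 = Re w2" and im: "Im (\<Psi> w1) = Im (\<Psi> w2)"
    unfolding shearT_def by (auto simp: complex_eq_iff)
  have "\<not> Im w1 < Im w2" using vstrict[OF w(1) re] im by auto
  moreover have "\<not> Im w2 < Im w1" using vstrict[OF w(2) re[symmetric]] im by auto
  ultimately show "w1 = w2" using re by (simp add: complex_eq_iff)
qed

lemma K_claim:
  assumes w1: "w1 \<in> \<Omega>" and w2: "w2 \<in> \<Omega>" and t: "t1 \<ge> 0" "t2 \<ge> 0" "t1 + t2 = 1"
  shows "\<exists>s. Im (\<Psi> (of_real (t1 * Re w1 + t2 * Re w2) + \<i> * of_real s)) \<ge> t1 * Im (\<Psi> w1) + t2 * Im (\<Psi> w2)"
proof (rule ccontr)
  define x1 where "x1 = Re w1"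
  define x2 where "x2 = Re w2"
  define x where "x = t1 * x1 + t2 * x2"
  define c where "c = t1 * Im (\<Psi> w1) + t2 * Im (\<Psi> w2)"
  define P where "P = (\<lambda>s::real. of_real x + \<i> * of_real s)"
  define v where "v = (\<lambda>w. Im (\<Psi> w))"
  define g where "g = deriv \<Psi>"
  assume "\<not> ?thesis"
  hence neg: "\<And>s. v (P s) < c" unfolding v_def P_def x_def c_def x1_def x2_def by (meson not_le)
  have hor: "of_real q + \<i> * of_real s \<in> \<Omega>" if q: "min x1 x2 \<le> q" "q \<le> max x1 x2" for q s
  proof -
    obtain \<mu> where mu: "0 \<le> \<mu>" "\<mu> \<le> 1" "q = (1 - \<mu>) * x1 + \<mu> * x2"
    proof (cases "x1 \<le> x2")
      case True
      show ?thesis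
      proof (cases "x1 = x2")
        case True then show ?thesis using that[of 0] q by auto
      next
        case False
        with True have lt: "x1 < x2" by simp
        show ?thesis
          apply (rule that[of "(q - x1) / (x2 - x1)"])
        using q lt apply (simp_all add: divide_simps)
        by (simp add: algebra_simps)
      qed
    next
      case False
      hence lt: "x2 < x1" by simp
      show ?thesis
        apply (rule that[of "(q - x1) / (x2 - x1)"])
        using q lt apply (simp_all add: divide_simps)
        by (simp add: algebra_simps)
    qed
    have m: "(1 - \<mu>) *\<^sub>R w1 + \<mu> *\<^sub>R w2 \<in> \<Omega>"
      using cvx w1 w2 mu unfolding convex_alt by blast
    have "of_real q + \<i> * of_real s = ((1 - \<mu>) *\<^sub>R w1 + \<mu> *\<^sub>R w2) + \<i> * of_real (s - Im ((1 - \<mu>) *\<^sub>R w1 + \<mu> *\<^sub>R w2))"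
      using mu(3) by (simp add: complex_eq_iff x1_def x2_def scaleR_conv_of_real)
    thus ?thesis using vi[OF m, of "s - Im ((1 - \<mu>) *\<^sub>R w1 + \<mu> *\<^sub>R w2)"] by simp
  qed
  have xr: "min x1 x2 \<le> x" "x \<le> max x1 x2"
  proof -
    have "x = (1 - t2) * x1 + t2 * x2" using t unfolding x_def by simp
    thus "min x1 x2 \<le> x" "x \<le> max x1 x2" using conv_between[of t2 x1 x2] t by auto
  qed
  have PO: "P s \<in> \<Omega>" for s using hor[OF xr] unfolding P_def .
  have cL: "compact ((of_real :: real \<Rightarrow> complex) ` {min x1 x2 .. max x1 x2})"
    by (intro compact_continuous_image continuous_intros) auto
  have sL: "(of_real :: real \<Rightarrow> complex) ` {min x1 x2 .. max x1 x2} \<subseteq> \<Omega>"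
    using hor[of _ 0] by auto
  obtain r where r: "r > 0" and rb: "(\<Union>q\<in>(of_real :: real \<Rightarrow> complex) ` {min x1 x2 .. max x1 x2}. ball q r) \<subseteq> \<Omega>"
    by (rule compact_subset_open_imp_ball_epsilon_subset[OF cL opn sL])
  have balls: "ball (of_real q + \<i> * of_real s) r \<subseteq> \<Omega>" if "min x1 x2 \<le> q" "q \<le> max x1 x2" for q s
  proof
    fix z assume z: "z \<in> ball (of_real q + \<i> * of_real s) r"
    have "z - \<i> * of_real s \<in> ball (of_real q) r" using z by (simp add: dist_norm algebra_simps)
    hence "z - \<i> * of_real s \<in> (\<Union>q\<in>(of_real :: real \<Rightarrow> complex) ` {min x1 x2 .. max x1 x2}. ball q r)"
      using that by auto
    hence "z - \<i> * of_real s \<in> \<Omega>" using rb by blast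
    from vi[OF this, of s] show "z \<in> \<Omega>" by simp
  qed
  have hol_g: "g holomorphic_on \<Omega>" unfolding g_def by (rule holomorphic_deriv[OF hol opn])
  have pos_g: "\<And>z. z \<in> \<Omega> \<Longrightarrow> Re (g z) > 0" unfolding g_def by (rule pos)
  define d where "d = x2 - x1"
  obtain n :: nat where n: "\<bar>d\<bar> \<le> real n * r / 2"
  proof -
    obtain n :: nat where "2 * \<bar>d\<bar> / r \<le> real n" using real_arch_simple by blast
    thus ?thesis using r by (intro that[of n]) (simp add: field_simps)
  qed
  define C0 where "C0 = (3::real)^n - 1"
  have C0: "C0 \<ge> 0" unfolding C0_def by simp
  have range_abs: "\<bar>\<tau>\<bar> \<le> \<bar>d\<bar>" if "min x1 x2 - x \<le> \<tau>" "\<tau> \<le> max x1 x2 - x" for \<tau>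
    using that xr unfolding d_def min_def max_def by (auto split: if_splits)
  have ballsP: "ball (P s + of_real \<tau>) r \<subseteq> \<Omega>" if "min x1 x2 - x \<le> \<tau>" "\<tau> \<le> max x1 x2 - x" for s \<tau>
  proof -
    have e: "P s + of_real \<tau> = of_real (x + \<tau>) + \<i> * of_real s" unfolding P_def by simp
    show ?thesis unfolding e using balls[of "x + \<tau>" s] that by simp
  qed
  have chain: "norm (g (P s + of_real \<tau>) - g (P s)) \<le> C0 * Re (g (P s))"
    if tr: "min x1 x2 - x \<le> \<tau>" "\<tau> \<le> max x1 x2 - x" for s \<tau>
  proof -
    have ta: "\<bar>\<tau>\<bar> \<le> real n * r / 2" using range_abs[OF tr] n by linarith
    have lohi: "min x1 x2 - x \<le> 0" "0 \<le> max x1 x2 - x" using xr by auto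
    show ?thesis
      using chain_est[OF hol_g pos_g r lohi ballsP tr ta] unfolding C0_def by blast
  qed
  have taylor: "norm (\<Psi> (P s + of_real a) - \<Psi> (P s) - of_real a * g (P s)) \<le> C0 * Re (g (P s)) * \<bar>a\<bar>"
    if ar: "min x1 x2 - x \<le> a" "a \<le> max x1 x2 - x" for s a
  proof -
    let ?S = "closed_segment (P s) (P s + of_real a)"
    have segpts: "\<exists>\<tau>. z = P s + of_real \<tau> \<and> min x1 x2 - x \<le> \<tau> \<and> \<tau> \<le> max x1 x2 - x"
      if zS: "z \<in> ?S" for z
    proof -
      obtain \<mu> where mu: "0 \<le> \<mu>" "\<mu> \<le> 1" "z = (1 - \<mu>) *\<^sub>R P s + \<mu> *\<^sub>R (P s + of_real a)"
        using zS unfolding closed_segment_def by auto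
      have "z = P s + of_real (\<mu> * a)" using mu(3) by (simp add: scaleR_conv_of_real algebra_simps)
      moreover have "min x1 x2 - x \<le> \<mu> * a \<and> \<mu> * a \<le> max x1 x2 - x"
        using conv_between[OF mu(1,2), of 0 a] ar xr by auto
      ultimately show ?thesis by blast
    qed
    have inO: "z \<in> \<Omega>" if zS: "z \<in> ?S" for z
    proof -
      obtain \<tau> where "z = P s + of_real \<tau>" "min x1 x2 - x \<le> \<tau>" "\<tau> \<le> max x1 x2 - x"
        using segpts[OF zS] by blast
      thus ?thesis using ballsP[of \<tau> s] r by auto
    qed
    have "norm ((\<lambda>z. \<Psi> z - z * g (P s)) (P s + of_real a) - (\<lambda>z. \<Psi> z - z * g (P s)) (P s))
          \<le> (C0 * Re (g (P s))) * norm (P s + of_real a - P s)"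
    proof (rule field_differentiable_bound[where f' = "\<lambda>z. g z - g (P s)"])
      show "convex ?S" by simp
      fix z assume z: "z \<in> ?S"
      show "((\<lambda>z. \<Psi> z - z * g (P s)) has_field_derivative g z - g (P s)) (at z within ?S)"
        using holomorphic_derivI[OF hol opn inO[OF z]] unfolding g_def
        by (auto intro!: derivative_eq_intros)
      show "norm (g z - g (P s)) \<le> C0 * Re (g (P s))" using segpts[OF z] chain by auto
    qed auto
    thus ?thesis by (simp add: algebra_simps)
  qed
  define a1 where "a1 = x1 - x"
  define a2 where "a2 = x2 - x"
  have a1r: "min x1 x2 - x \<le> a1" "a1 \<le> max x1 x2 - x" unfolding a1_def by auto
  have a2r: "min x1 x2 - x \<le> a2" "a2 \<le> max x1 x2 - x" unfolding a2_def by auto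
  have sum0: "t1 * a1 + t2 * a2 = 0"
  proof -
    have "t1 * a1 + t2 * a2 = x - (t1 + t2) * x" unfolding a1_def a2_def x_def by (simp add: algebra_simps)
    thus ?thesis using t by simp
  qed
  define C where "C = C0 * \<bar>d\<bar> + 1"
  have Cpos: "C > 0" unfolding C_def using C0 by (simp add: add_nonneg_pos)
  have Kbound: "\<bar>t1 * v (of_real x1 + \<i> * of_real s) + t2 * v (of_real x2 + \<i> * of_real s) - v (P s)\<bar>
      \<le> C * Re (g (P s))" for s
  proof -
    let ?p = "P s"
    have e1: "?p + of_real a1 = of_real x1 + \<i> * of_real s" unfolding P_def a1_def by simp
    have e2: "?p + of_real a2 = of_real x2 + \<i> * of_real s" unfolding P_def a2_def by simp
    define D1 where "D1 = \<Psi> (?p + of_real a1) - \<Psi> ?p - of_real a1 * g ?p"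
    define D2 where "D2 = \<Psi> (?p + of_real a2) - \<Psi> ?p - of_real a2 * g ?p"
    define K where "K = of_real t1 * \<Psi> (?p + of_real a1) + of_real t2 * \<Psi> (?p + of_real a2) - \<Psi> ?p"
    have ts: "of_real t1 + of_real t2 = (1::complex)" using t(3) by (metis of_real_1 of_real_add)
    have sa: "of_real t1 * of_real a1 + of_real t2 * of_real a2 = (0::complex)"
      using sum0 by (metis of_real_0 of_real_add of_real_mult)
    have "K - (of_real t1 * D1 + of_real t2 * D2)
        = ((of_real t1 + of_real t2) - 1) * \<Psi> ?p + (of_real t1 * of_real a1 + of_real t2 * of_real a2) * g ?p"
      unfolding K_def D1_def D2_def by (simp add: algebra_simps)
    hence Keq: "K = of_real t1 * D1 + of_real t2 * D2" using ts sa by simp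
    have "norm K \<le> t1 * norm D1 + t2 * norm D2"
      unfolding Keq using t by (metis (no_types, lifting) abs_of_nonneg norm_mult norm_of_real norm_triangle_ineq)
    also have "\<dots> \<le> t1 * (C0 * Re (g ?p) * \<bar>d\<bar>) + t2 * (C0 * Re (g ?p) * \<bar>d\<bar>)"
    proof (intro add_mono mult_left_mono)
      have gp: "Re (g ?p) \<ge> 0" using pos_g[OF PO[of s]] by simp
      show "norm D1 \<le> C0 * Re (g ?p) * \<bar>d\<bar>"
        using taylor[OF a1r, of s] range_abs[OF a1r] C0 gp unfolding D1_def
        by (meson mult_left_mono mult_nonneg_nonneg order_trans)
      show "norm D2 \<le> C0 * Re (g ?p) * \<bar>d\<bar>"
        using taylor[OF a2r, of s] range_abs[OF a2r] C0 gp unfolding D2_def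
        by (meson mult_left_mono mult_nonneg_nonneg order_trans)
    qed (use t in auto)
    also have "\<dots> = (t1 + t2) * (C0 * Re (g ?p) * \<bar>d\<bar>)" by (simp only: distrib_right)
    also have "\<dots> = C0 * Re (g ?p) * \<bar>d\<bar>" using t(3) by simp
    also have "\<dots> \<le> C * Re (g ?p)" 
      using pos_g[OF PO[of s]] unfolding C_def by (simp add: algebra_simps)
    finally have nK: "norm K \<le> C * Re (g ?p)" .
    have "Im K = t1 * v (of_real x1 + \<i> * of_real s) + t2 * v (of_real x2 + \<i> * of_real s) - v (P s)"
      unfolding K_def v_def e1 e2 by simp
    thus ?thesis using abs_Im_le_cmod[of K] nK by linarith
  qed
  define \<delta>1 where "\<delta>1 = v (w1 + \<i> * of_real 1) - v w1"
  define \<delta>2 where "\<delta>2 = v (w2 + \<i> * of_real 1) - v w2"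
  have d1: "\<delta>1 > 0" using vmono[OF w1, of 0 1] unfolding \<delta>1_def v_def by simp
  have d2: "\<delta>2 > 0" using vmono[OF w2, of 0 1] unfolding \<delta>2_def v_def by simp
  define \<delta> where "\<delta> = t1 * \<delta>1 + t2 * \<delta>2"
  have dpos: "\<delta> > 0"
  proof -
    have "t1 * min \<delta>1 \<delta>2 + t2 * min \<delta>1 \<delta>2 \<le> \<delta>"
      unfolding \<delta>_def using t by (intro add_mono mult_left_mono) auto
    moreover have "t1 * min \<delta>1 \<delta>2 + t2 * min \<delta>1 \<delta>2 = min \<delta>1 \<delta>2"
      using t(3) by (metis distrib_right mult_1)
    ultimately show ?thesis using d1 d2 by linarith
  qed
  define S0 where "S0 = max (Im w1) (Im w2) + 1"
  have low1: "v (of_real x1 + \<i> * of_real s) \<ge> v w1 + \<delta>1" if "s \<ge> S0" for s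
  proof -
    have e: "of_real x1 + \<i> * of_real s = w1 + \<i> * of_real (s - Im w1)" unfolding x1_def by (simp add: complex_eq_iff)
    have "v (w1 + \<i> * of_real 1) \<le> v (w1 + \<i> * of_real (s - Im w1))"
      using vmono_le[OF w1, of 1 "s - Im w1"] that unfolding S0_def v_def by simp
    thus ?thesis using e unfolding \<delta>1_def by simp
  qed
  have low2: "v (of_real x2 + \<i> * of_real s) \<ge> v w2 + \<delta>2" if "s \<ge> S0" for s
  proof -
    have e: "of_real x2 + \<i> * of_real s = w2 + \<i> * of_real (s - Im w2)" unfolding x2_def by (simp add: complex_eq_iff)
    have "v (w2 + \<i> * of_real 1) \<le> v (w2 + \<i> * of_real (s - Im w2))"
      using vmono_le[OF w2, of 1 "s - Im w2"] that unfolding S0_def v_def by simp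
    thus ?thesis using e unfolding \<delta>2_def by simp
  qed
  define \<epsilon> where "\<epsilon> = \<delta> / C"
  have epos: "\<epsilon> > 0" unfolding \<epsilon>_def using dpos Cpos by simp
  have gbig: "Re (g (P s)) > \<epsilon>" if "s \<ge> S0" for s
  proof -
    have "t1 * (v w1 + \<delta>1) + t2 * (v w2 + \<delta>2) \<le> t1 * v (of_real x1 + \<i> * of_real s) + t2 * v (of_real x2 + \<i> * of_real s)"
      using low1[OF that] low2[OF that] t by (intro add_mono mult_left_mono) auto
    moreover have "t1 * (v w1 + \<delta>1) + t2 * (v w2 + \<delta>2) = c + \<delta>"
      unfolding c_def \<delta>_def v_def by (simp add: algebra_simps)
    ultimately have "\<delta> < \<bar>t1 * v (of_real x1 + \<i> * of_real s) + t2 * v (of_real x2 + \<i> * of_real s) - v (P s)\<bar>"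
      using neg[of s] by linarith
    hence "\<delta> < C * Re (g (P s))" using Kbound[of s] by linarith
    thus ?thesis unfolding \<epsilon>_def using Cpos by (simp add: divide_less_eq mult.commute)
  qed
  define S1 where "S1 = S0 + (c - v (P S0)) / \<epsilon> + 1"
  have S01: "S0 < S1" unfolding S1_def using neg[of S0] epos by (simp add: add_pos_pos)
  have x0: "of_real x \<in> \<Omega>" using PO[of 0] unfolding P_def by simp
  have Pe: "P s = of_real x + \<i> * of_real s" for s unfolding P_def ..
  obtain \<xi> where xi: "S0 < \<xi>" "\<xi> < S1" "v (P S1) - v (P S0) = (S1 - S0) * Re (g (P \<xi>))"
    using MVT2[OF S01, of "\<lambda>s. v (P s)" "\<lambda>s. Re (g (P s))"] vderiv[OF x0]
    unfolding Pe v_def g_def by blast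
  have "(S1 - S0) * \<epsilon> \<le> (S1 - S0) * Re (g (P \<xi>))"
    using gbig[of \<xi>] xi S01 by (intro mult_left_mono) auto
  moreover have "(S1 - S0) * \<epsilon> = c - v (P S0) + \<epsilon>" unfolding S1_def using epos by (simp add: field_simps)
  ultimately have "v (P S1) \<ge> c + \<epsilon>" using xi(3) by linarith
  thus False using neg[of S1] epos by linarith
qed

end

lemma T_convex:
  fixes \<Omega> :: "complex set" and \<Psi> :: "complex \<Rightarrow> complex"
  assumes opn: "open \<Omega>" and cvx: "convex \<Omega>"
    and vi: "\<And>w s. w \<in> \<Omega> \<Longrightarrow> w + \<i> * of_real s \<in> \<Omega>"
    and hol: "\<Psi> holomorphic_on \<Omega>"
    and pos: "\<And>w. w \<in> \<Omega> \<Longrightarrow> Re (deriv \<Psi> w) > 0"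
  shows "convex (shearT \<Psi> ` \<Omega>)"
proof -
  define \<Omega>2 where "\<Omega>2 = (\<lambda>x. - x) ` \<Omega>"
  define \<Psi>2 where "\<Psi>2 = (\<lambda>w. - \<Psi> (- w))"
  have opn2: "open \<Omega>2" unfolding \<Omega>2_def by (rule open_negations[OF opn])
  have cvx2: "convex \<Omega>2" unfolding \<Omega>2_def by (rule convex_negations[OF cvx])
  have mem2: "w \<in> \<Omega>2 \<longleftrightarrow> - w \<in> \<Omega>" for w unfolding \<Omega>2_def by force
  have vi2: "w + \<i> * of_real s \<in> \<Omega>2" if "w \<in> \<Omega>2" for w s
  proof -
    have "- w + \<i> * of_real (- s) \<in> \<Omega>" using vi that mem2 by blast
    thus ?thesis using mem2 by (simp add: algebra_simps)
  qed
  have der2: "(\<Psi>2 has_field_derivative deriv \<Psi> (- w)) (at w)" if "w \<in> \<Omega>2" for w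
  proof -
    have "(\<Psi> has_field_derivative deriv \<Psi> (- w)) (at (- w))"
      using holomorphic_derivI[OF hol opn] that mem2 by blast
    thus ?thesis unfolding \<Psi>2_def
      by (auto intro!: derivative_eq_intros DERIV_chain2[where f = \<Psi>])
  qed
  have hol2: "\<Psi>2 holomorphic_on \<Omega>2"
    using der2 by (meson holomorphic_on_open opn2)
  have pos2: "Re (deriv \<Psi>2 w) > 0" if "w \<in> \<Omega>2" for w
    using DERIV_imp_deriv[OF der2[OF that]] pos that mem2 by simp
  show ?thesis
  proof (rule convexI)
    fix z1 z2 and t1 t2 :: real
    assume z1: "z1 \<in> shearT \<Psi> ` \<Omega>" and z2: "z2 \<in> shearT \<Psi> ` \<Omega>" and tt0: "0 \<le> t1" "0 \<le> t2" "t1 + t2 = 1"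
    hence tt: "0 \<le> t1 \<and> 0 \<le> t2 \<and> t1 + t2 = 1" by simp
    obtain w1 where w1: "w1 \<in> \<Omega>" "z1 = shearT \<Psi> w1" using z1 by blast
    obtain w2 where w2: "w2 \<in> \<Omega>" "z2 = shearT \<Psi> w2" using z2 by blast
    define x where "x = t1 * Re w1 + t2 * Re w2"
    define c where "c = t1 * Im (\<Psi> w1) + t2 * Im (\<Psi> w2)"
    define f where "f = (\<lambda>s. Im (\<Psi> (of_real x + \<i> * of_real s)))"
    obtain shi where shi: "f shi \<ge> c"
      using K_claim[OF opn cvx vi hol pos w1(1) w2(1)] tt unfolding f_def x_def c_def by blast
    obtain slo where slo: "f slo \<le> c"
    proof -
      have m1: "- w1 \<in> \<Omega>2" "- w2 \<in> \<Omega>2" using w1 w2 mem2 by auto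
      obtain s where s: "Im (\<Psi>2 (of_real (t1 * Re (- w1) + t2 * Re (- w2)) + \<i> * of_real s))
            \<ge> t1 * Im (\<Psi>2 (- w1)) + t2 * Im (\<Psi>2 (- w2))"
        using K_claim[OF opn2 cvx2 vi2 hol2 pos2 m1] tt by blast
      have "- (of_real (t1 * Re (- w1) + t2 * Re (- w2)) + \<i> * of_real s) = of_real x + \<i> * of_real (- s)"
        unfolding x_def by (simp add: complex_eq_iff)
      hence "f (- s) \<le> c" using s unfolding \<Psi>2_def f_def c_def by simp
      thus ?thesis by (rule that)
    qed
    have x0: "of_real x \<in> \<Omega>"
    proof -
      have "t1 *\<^sub>R w1 + t2 *\<^sub>R w2 \<in> \<Omega>" using cvx w1 w2 tt unfolding convex_def by blast
      moreover have "t1 *\<^sub>R w1 + t2 *\<^sub>R w2 + \<i> * of_real (- Im (t1 *\<^sub>R w1 + t2 *\<^sub>R w2)) = of_real x"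
        unfolding x_def by (simp add: complex_eq_iff)
      ultimately show ?thesis using vi by metis
    qed
    have xs: "of_real x + \<i> * of_real s \<in> \<Omega>" for s using vi[OF x0] .
    have fc: "continuous_on A f" for A unfolding f_def by (rule vcont[OF opn cvx vi hol pos x0])
    obtain s where s: "f s = c"
    proof (cases "slo \<le> shi")
      case True
      from IVT'[of f slo c shi, OF slo shi True fc] show ?thesis using that by blast
    next
      case False
      from IVT2'[of f slo c shi, OF slo shi _ fc] False show ?thesis using that by force
    qed
    have "shearT \<Psi> (of_real x + \<i> * of_real s) = t1 *\<^sub>R z1 + t2 *\<^sub>R z2"
      using s unfolding w1(2) w2(2) shearT_def f_def x_def c_def
      by (simp add: complex_eq_iff)
    thus "t1 *\<^sub>R z1 + t2 *\<^sub>R z2 \<in> shearT \<Psi> ` \<Omega>" using xs by (metis image_eqI)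
  qed
qed


lemma Re_quot_pos:
  fixes a b :: complex
  assumes "norm b < norm a"
  shows "Re ((a - b) / (a + b)) > 0"
proof -
  have ab: "a + b \<noteq> 0"
  proof
    assume "a + b = 0" hence "b = - a" by (simp add: add_eq_0_iff)
    thus False using assms by simp
  qed
  have "Re ((a - b) * cnj (a + b)) = (norm a)^2 - (norm b)^2"
    unfolding cmod_power2 by (simp add: algebra_simps power2_eq_square)
  moreover have "(norm b)^2 < (norm a)^2" using assms by (simp add: power_strict_mono)
  ultimately have "Re ((a - b) * cnj (a + b)) > 0" by simp
  moreover have "(a - b) / (a + b) = ((a - b) * cnj (a + b)) / of_real ((norm (a + b))^2)"
  proof -
    have c: "cnj (a + b) \<noteq> 0" using ab by (simp del: complex_cnj_add)
    have "(a - b) / (a + b) = ((a - b) * cnj (a + b)) / ((a + b) * cnj (a + b))"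
      using c by simp
    also have "(a + b) * cnj (a + b) = of_real ((norm (a + b))^2)" by (rule complex_norm_square[symmetric])
    finally show ?thesis .
  qed
  ultimately show ?thesis using ab by (simp add: Re_divide_of_real)
qed

lemma harm_identity:
  fixes u h g :: complex
  assumes u: "norm u = 1"
  shows "u * (h + cnj g) = of_real (Re (u * (h + cnj u ^ 2 * g))) + \<i> * of_real (Im (u * (h - cnj u ^ 2 * g)))"
proof -
  have uu: "u * cnj u = 1" using u by (simp add: complex_norm_square[symmetric])
  have e: "u * (cnj u ^ 2 * g) = cnj u * g"
    by (metis (no_types, lifting) mult.assoc mult.left_commute mult_1 power2_eq_square uu)
  have "of_real (Re (u * (h + cnj u ^ 2 * g))) + \<i> * of_real (Im (u * (h - cnj u ^ 2 * g)))
      = of_real (Re (u * h + cnj u * g)) + \<i> * of_real (Im (u * h - cnj u * g))"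
    by (simp add: distrib_left right_diff_distrib e)
  also have "\<dots> = u * h + cnj (cnj u * g)" by (simp add: complex_eq_iff)
  also have "\<dots> = u * (h + cnj g)" by (simp add: algebra_simps)
  finally show ?thesis by simp
qed

lemma assembly:
  fixes u :: complex and H G E E' :: "complex \<Rightarrow> complex" and \<Omega> :: "complex set"
  assumes u: "norm u = 1"
    and holH: "H holomorphic_on ball 0 1" and holG: "G holomorphic_on ball 0 1"
    and H0: "H 0 = 0" and G0: "G 0 = 0"
    and sp: "\<And>z. z \<in> ball 0 1 \<Longrightarrow> norm (deriv G z) < norm (deriv H z)"
    and opn: "open \<Omega>" and cvx: "convex \<Omega>"
    and vi: "\<And>w s. w \<in> \<Omega> \<Longrightarrow> w + \<i> * of_real s \<in> \<Omega>"
    and O0: "0 \<in> \<Omega>"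
    and Ed: "\<And>w. w \<in> \<Omega> \<Longrightarrow> (E has_field_derivative E' w) (at w)"
    and Ein: "\<And>w. w \<in> \<Omega> \<Longrightarrow> E w \<in> ball 0 1"
    and E0: "E 0 = 0"
    and Esurj: "\<And>z. z \<in> ball 0 1 \<Longrightarrow> \<exists>w\<in>\<Omega>. E w = z"
    and Einv: "\<And>w. w \<in> \<Omega> \<Longrightarrow> E' w * (u * (deriv H (E w) + cnj u ^ 2 * deriv G (E w))) = 1"
  shows "inj_on (harm H G) (ball 0 1) \<and> convex (harm H G ` ball 0 1)"
proof -
  define \<phi> where "\<phi> = (\<lambda>z. u * (H z + cnj u ^ 2 * G z))"
  define \<psi> where "\<psi> = (\<lambda>z. u * (H z - cnj u ^ 2 * G z))"
  define \<Psi> where "\<Psi> = (\<lambda>w. \<psi> (E w))"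
  have dH: "(H has_field_derivative deriv H z) (at z)" if "z \<in> ball 0 1" for z
    using holomorphic_derivI[OF holH _ that] by simp
  have dG: "(G has_field_derivative deriv G z) (at z)" if "z \<in> ball 0 1" for z
    using holomorphic_derivI[OF holG _ that] by simp
  have dphi: "(\<phi> has_field_derivative u * (deriv H z + cnj u ^ 2 * deriv G z)) (at z)" if "z \<in> ball 0 1" for z
    unfolding \<phi>_def using dH[OF that] dG[OF that] by (auto intro!: derivative_eq_intros)
  have dpsi: "(\<psi> has_field_derivative u * (deriv H z - cnj u ^ 2 * deriv G z)) (at z)" if "z \<in> ball 0 1" for z
    unfolding \<psi>_def using dH[OF that] dG[OF that] by (auto intro!: derivative_eq_intros)
  have cst: "\<exists>c. \<forall>w\<in>\<Omega>. \<phi> (E w) - w = c"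
  proof (rule has_field_derivative_zero_constant[OF cvx])
    fix w assume w: "w \<in> \<Omega>"
    have "((\<lambda>w. \<phi> (E w) - w) has_field_derivative (u * (deriv H (E w) + cnj u ^ 2 * deriv G (E w))) * E' w - 1) (at w)"
      using DERIV_chain2[OF dphi[OF Ein[OF w]] Ed[OF w]] by (auto intro!: derivative_eq_intros)
    moreover have "(u * (deriv H (E w) + cnj u ^ 2 * deriv G (E w))) * E' w - 1 = 0"
      using Einv[OF w] by (simp add: mult.commute)
    ultimately show "((\<lambda>w. \<phi> (E w) - w) has_field_derivative 0) (at w within \<Omega>)"
      by (simp add: has_field_derivative_at_within)
  qed
  have phiE: "\<phi> (E w) = w" if "w \<in> \<Omega>" for w
  proof -
    obtain c where c: "\<And>w. w \<in> \<Omega> \<Longrightarrow> \<phi> (E w) - w = c" using cst by blast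
    have "c = 0" using c[OF O0] E0 H0 G0 unfolding \<phi>_def by simp
    thus ?thesis using c[OF that] by simp
  qed
  have dPsi: "(\<Psi> has_field_derivative u * (deriv H (E w) - cnj u ^ 2 * deriv G (E w)) * E' w) (at w)"
    if w: "w \<in> \<Omega>" for w
    unfolding \<Psi>_def using DERIV_chain2[OF dpsi[OF Ein[OF w]] Ed[OF w]] .
  have holPsi: "\<Psi> holomorphic_on \<Omega>"
    using dPsi by (meson holomorphic_on_open opn)
  have posPsi: "Re (deriv \<Psi> w) > 0" if w: "w \<in> \<Omega>" for w
  proof -
    define a where "a = deriv H (E w)"
    define b where "b = cnj u ^ 2 * deriv G (E w)"
    have nb: "norm b < norm a" using sp[OF Ein[OF w]] u unfolding a_def b_def by (simp add: norm_mult norm_power)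
    have ab: "a + b \<noteq> 0"
    proof
      assume "a + b = 0" hence "b = - a" by (simp add: add_eq_0_iff)
      thus False using nb by simp
    qed
    have inv: "E' w * (u * (a + b)) = 1" using Einv[OF w] unfolding a_def b_def .
    have "deriv \<Psi> w = u * (a - b) * E' w" using DERIV_imp_deriv[OF dPsi[OF w]] unfolding a_def b_def .
    also have "\<dots> = (a - b) / (a + b)"
    proof -
      have "u * (a + b) \<noteq> 0" using inv by auto
      hence "E' w = 1 / (u * (a + b))" using inv by (simp add: field_simps)
      moreover have "u \<noteq> 0" using u by auto
      ultimately show ?thesis by simp
    qed
    finally show ?thesis using Re_quot_pos[OF nb] by simp
  qed
  have Tinj: "inj_on (shearT \<Psi>) \<Omega>" by (rule T_inj[OF opn cvx vi holPsi posPsi])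
  have Tcvx: "convex (shearT \<Psi> ` \<Omega>)" by (rule T_convex[OF opn cvx vi holPsi posPsi])
  have key: "harm H G (E w) = cnj u * shearT \<Psi> w" if w: "w \<in> \<Omega>" for w
  proof -
    have "u * harm H G (E w) = shearT \<Psi> w"
      unfolding harm_def shearT_def harm_identity[OF u] \<Psi>_def
      using phiE[OF w] unfolding \<phi>_def \<psi>_def by simp
    moreover have "cnj u * u = 1" using u by (simp add: complex_norm_square[symmetric] mult.commute)
    ultimately show ?thesis by (metis mult.assoc mult_1)
  qed
  have cu: "cnj u \<noteq> 0" using u by auto
  have inj: "inj_on (harm H G) (ball 0 1)"
  proof (rule inj_onI)
    fix z1 z2 assume z: "z1 \<in> ball 0 1" "z2 \<in> ball 0 1" and eq: "harm H G z1 = harm H G z2"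
    obtain w1 where w1: "w1 \<in> \<Omega>" "E w1 = z1" using Esurj[OF z(1)] by blast
    obtain w2 where w2: "w2 \<in> \<Omega>" "E w2 = z2" using Esurj[OF z(2)] by blast
    have "cnj u * shearT \<Psi> w1 = cnj u * shearT \<Psi> w2" using eq key[OF w1(1)] key[OF w2(1)] w1 w2 by simp
    hence "shearT \<Psi> w1 = shearT \<Psi> w2" using cu by simp
    hence "w1 = w2" using Tinj w1 w2 by (meson inj_onD)
    thus "z1 = z2" using w1 w2 by simp
  qed
  have img: "harm H G ` ball 0 1 = (\<lambda>y. cnj u * y) ` (shearT \<Psi> ` \<Omega>)"
  proof
    show "harm H G ` ball 0 1 \<subseteq> (\<lambda>y. cnj u * y) ` (shearT \<Psi> ` \<Omega>)"
    proof
      fix y assume "y \<in> harm H G ` ball 0 1"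
      then obtain z where z: "z \<in> ball 0 1" "y = harm H G z" by blast
      obtain w where w: "w \<in> \<Omega>" "E w = z" using Esurj[OF z(1)] by blast
      show "y \<in> (\<lambda>y. cnj u * y) ` (shearT \<Psi> ` \<Omega>)" using key[OF w(1)] w z by auto
    qed
    show "(\<lambda>y. cnj u * y) ` (shearT \<Psi> ` \<Omega>) \<subseteq> harm H G ` ball 0 1"
    proof
      fix y assume "y \<in> (\<lambda>y. cnj u * y) ` (shearT \<Psi> ` \<Omega>)"
      then obtain w where w: "w \<in> \<Omega>" "y = cnj u * shearT \<Psi> w" by blast
      show "y \<in> harm H G ` ball 0 1" using key[OF w(1)] w Ein[OF w(1)] by (metis image_eqI)
    qed
  qed
  have "convex ((\<lambda>y. cnj u * y) ` (shearT \<Psi> ` \<Omega>))"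
    by (rule convex_linear_image[OF _ Tcvx]) (rule bounded_linear.linear[OF bounded_linear_mult_right])
  thus ?thesis using inj img by simp
qed


lemma sq_less_iff_nonneg:
  fixes x y :: real
  assumes "0 \<le> x" "0 \<le> y"
  shows "x < y \<longleftrightarrow> x^2 < y^2"
  using assms power_strict_mono[of x y 2] power_less_imp_less_base[of x 2 y] by auto

lemma half_norm_iff:
  fixes w :: complex and A :: real
  assumes "A > 0"
  shows "norm w < norm (of_real A - w) \<longleftrightarrow> Re w < A / 2"
proof -
  have "norm w < norm (of_real A - w) \<longleftrightarrow> (norm w)^2 < (norm (of_real A - w))^2"
    by (rule sq_less_iff_nonneg) auto
  also have "\<dots> \<longleftrightarrow> 0 < A * (A - 2 * Re w)"
    unfolding cmod_power2 by (simp add: power2_eq_square algebra_simps)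
  also have "\<dots> \<longleftrightarrow> 0 < A - 2 * Re w" using assms by (simp add: zero_less_mult_iff)
  also have "\<dots> \<longleftrightarrow> Re w < A / 2" by linarith
  finally show ?thesis .
qed

lemma core_half:
  fixes u lam :: complex and A :: real and H G :: "complex \<Rightarrow> complex"
  assumes u: "norm u = 1" and lam: "lam = 1" and A: "A > 0"
    and holH: "H holomorphic_on ball 0 1" and holG: "G holomorphic_on ball 0 1"
    and H0: "H 0 = 0" and G0: "G 0 = 0"
    and sp: "\<And>z. z \<in> ball 0 1 \<Longrightarrow> norm (deriv G z) < norm (deriv H z)"
    and eqn: "\<And>z. z \<in> ball 0 1 \<Longrightarrow> deriv H z + cnj u ^ 2 * deriv G z
        = of_real A / ((1 + lam * u * z) * (1 + cnj lam * u * z))"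
  shows "inj_on (harm H G) (ball 0 1) \<and> convex (harm H G ` ball 0 1)"
proof -
  define \<Omega> where "\<Omega> = {w. Re w < A / 2}"
  define E where "E = (\<lambda>w. cnj u * w / (of_real A - w))"
  define E' where "E' = (\<lambda>w. cnj u * of_real A / (of_real A - w)^2)"
  have uu: "u * cnj u = 1" using u by (simp add: complex_norm_square[symmetric])
  have u0: "u \<noteq> 0" using u by auto
  have nz: "of_real A - w \<noteq> 0" if "w \<in> \<Omega>" for w
  proof
    assume "of_real A - w = 0" hence "Re w = A" by (simp add: complex_eq_iff)
    thus False using that A unfolding \<Omega>_def by simp
  qed
  show ?thesis
  proof (rule assembly[OF u holH holG H0 G0 sp, of \<Omega> E E'])
    show "open \<Omega>" unfolding \<Omega>_def by (rule open_halfspace_Re_lt)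
    show "convex \<Omega>" unfolding \<Omega>_def by (rule convex_halfspace_Re_lt)
    show "\<And>w s. w \<in> \<Omega> \<Longrightarrow> w + \<i> * of_real s \<in> \<Omega>" unfolding \<Omega>_def by simp
    show "0 \<in> \<Omega>" unfolding \<Omega>_def using A by simp
    show "E 0 = 0" unfolding E_def by simp
    fix w assume w: "w \<in> \<Omega>"
    show "(E has_field_derivative E' w) (at w)"
      unfolding E_def E'_def using nz[OF w]
      by (auto intro!: derivative_eq_intros simp: field_simps power2_eq_square)
    show "E w \<in> ball 0 1"
    proof -
      have "norm w < norm (of_real A - w)" using half_norm_iff[OF A] w unfolding \<Omega>_def by simp
      thus ?thesis unfolding E_def using nz[OF w] u by (simp add: norm_divide norm_mult divide_less_eq)
    qed
    have "E' w * (u * (deriv H (E w) + cnj u ^ 2 * deriv G (E w)))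
        = E' w * (u * (of_real A / ((1 + u * E w) * (1 + u * E w))))"
      using eqn[OF \<open>E w \<in> ball 0 1\<close>] lam by simp
    also have "u * E w = w / (of_real A - w)" unfolding E_def using uu by (simp add: mult.assoc[symmetric])
    also have "1 + w / (of_real A - w) = of_real A / (of_real A - w)" using nz[OF w] by (simp add: field_simps)
    also have "of_real A / (of_real A / (of_real A - w) * (of_real A / (of_real A - w))) = (of_real A - w)^2 / of_real A"
      using nz[OF w] A by (simp add: field_simps power2_eq_square)
    also have "E' w * (u * ((of_real A - w)^2 / of_real A)) = cnj u * u"
      unfolding E'_def using nz[OF w] A by (simp add: field_simps)
    also have "cnj u * u = 1" using uu by (simp add: mult.commute)
    finally show "E' w * (u * (deriv H (E w) + cnj u ^ 2 * deriv G (E w))) = 1" .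
  next
    fix z :: complex assume z: "z \<in> ball 0 1"
    have uz: "norm (u * z) < 1" using z u by (simp add: norm_mult)
    have d: "1 + u * z \<noteq> 0"
    proof
      assume "1 + u * z = 0" hence "u * z = -1" by (simp add: add_eq_0_iff)
      thus False using uz by simp
    qed
    define w where "w = of_real A * u * z / (1 + u * z)"
    have Aw: "of_real A - w = of_real A / (1 + u * z)" unfolding w_def using d by (simp add: field_simps)
    have "norm w < norm (of_real A - w)"
      unfolding Aw unfolding w_def using d A uz
      by (simp add: norm_divide norm_mult divide_strict_right_mono mult.assoc)
    hence wO: "w \<in> \<Omega>" using half_norm_iff[OF A] unfolding \<Omega>_def by simp
    have A0: "(of_real A :: complex) \<noteq> 0" using A by simp
    have "E w = cnj u * (w * (1 + u*z)) / of_real A" unfolding E_def Aw using d A0 by (simp add: field_simps)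
    also have "w * (1 + u*z) = of_real A * (u*z)" unfolding w_def using d by simp
    also have "cnj u * (of_real A * (u*z)) / of_real A = cnj u * (u * z)" using A0 by simp
    also have "\<dots> = z" using uu by (simp add: mult.assoc[symmetric] mult.commute[of "cnj u"])
    finally have "E w = z" .
    thus "\<exists>w\<in>\<Omega>. E w = z" using wO by blast
  qed
qed


lemma poly_id:
  fixes a b p q r :: real
  assumes "a^2 + b^2 = 1"
  shows "((r * p - 1)^2 + (r * q)^2) - ((r * p - (a^2 - b^2))^2 + (r * q - 2 * b * a)^2) = 4 * r * b * (q * a - p * b)"
  using assms by algebra

lemma trig_diff:
  fixes \<rho> \<eta> \<theta> :: real
  shows "(norm (of_real \<rho> * cis \<eta> - 1))^2 - (norm (of_real \<rho> * cis \<eta> - cis (2*\<theta>)))^2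
     = 4 * \<rho> * sin \<theta> * sin (\<eta> - \<theta>)"
proof -
  have "(norm (of_real \<rho> * cis \<eta> - 1))^2 = (\<rho> * cos \<eta> - 1)^2 + (\<rho> * sin \<eta>)^2"
    unfolding cmod_power2 by simp
  moreover have "(norm (of_real \<rho> * cis \<eta> - cis (2*\<theta>)))^2 = (\<rho> * cos \<eta> - ((cos \<theta>)^2 - (sin \<theta>)^2))^2 + (\<rho> * sin \<eta> - 2 * sin \<theta> * cos \<theta>)^2"
    unfolding cmod_power2 by (simp add: cos_double sin_double)
  moreover have "sin (\<eta> - \<theta>) = sin \<eta> * cos \<theta> - cos \<eta> * sin \<theta>" by (simp add: sin_diff)
  ultimately show ?thesis
    using poly_id[of "cos \<theta>" "sin \<theta>" \<rho> "cos \<eta>" "sin \<eta>"] by simp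
qed

lemma sin_neg_range:
  fixes t :: real
  assumes "- 2 * pi < t" "t < pi" "sin t < 0"
  shows "- pi < t \<and> t < 0"
proof -
  have "\<not> t \<ge> 0" using sin_ge_zero[of t] assms by force
  moreover have "\<not> t \<le> - pi"
  proof
    assume "t \<le> - pi"
    hence "0 \<le> t + 2*pi" "t + 2*pi \<le> pi" using assms by auto
    hence "sin (t + 2*pi) \<ge> 0" by (rule sin_ge_zero)
    thus False using assms by simp
  qed
  ultimately show ?thesis by simp
qed

lemma sin_neg_of_range:
  fixes t :: real
  assumes "- pi < t" "t < 0"
  shows "sin t < 0"
  using sin_gt_zero[of "- t"] assms by simp


lemma alg1:
  fixes Dm \<mu> L c k u a :: complex
  assumes "Dm \<noteq> 0" "\<mu> \<noteq> 0" "L \<noteq> 0"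
  shows "(c * k * \<mu> * L / Dm^2) * (u * (a / ((\<mu> * L / Dm) * (L / Dm)))) = (c * u) * (k * a / L)"
  using assms by (simp add: field_simps power2_eq_square)

lemma core_strip:
  fixes u lam :: complex and A :: real and H G :: "complex \<Rightarrow> complex"
  assumes u: "norm u = 1" and lam: "norm lam = 1" "Im lam > 0" and A: "A > 0"
    and holH: "H holomorphic_on ball 0 1" and holG: "G holomorphic_on ball 0 1"
    and H0: "H 0 = 0" and G0: "G 0 = 0"
    and sp: "\<And>z. z \<in> ball 0 1 \<Longrightarrow> norm (deriv G z) < norm (deriv H z)"
    and eqn: "\<And>z. z \<in> ball 0 1 \<Longrightarrow> deriv H z + cnj u ^ 2 * deriv G z
        = of_real A / ((1 + lam * u * z) * (1 + cnj lam * u * z))"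
  shows "inj_on (harm H G) (ball 0 1) \<and> convex (harm H G ` ball 0 1)"
proof -
  define \<theta> where "\<theta> = Arg lam"
  define s where "s = Im lam"
  have s: "s > 0" using lam unfolding s_def by simp
  have lamc: "lam = cis \<theta>" using rcis_cmod_Arg[of lam] lam unfolding \<theta>_def by (simp add: rcis_def)
  have th: "0 < \<theta>" "\<theta> < pi" using Arg_lt_pi[of lam] lam unfolding \<theta>_def by auto
  have sth: "sin \<theta> = s" unfolding s_def by (subst lamc) simp
  have lam2: "lam ^ 2 = cis (2 * \<theta>)"
  proof -
    have "lam ^ 2 = cis (\<theta> + \<theta>)" unfolding lamc power2_eq_square cis_mult ..
    also have "\<theta> + \<theta> = 2 * \<theta>" by simp
    finally show ?thesis .
  qed
  have ll: "cnj lam * lam = 1" using lam by (simp add: complex_norm_square[symmetric] mult.commute)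
  define L where "L = lam - cnj lam"
  have Le: "L = 2 * \<i> * of_real s" unfolding L_def s_def by (simp add: complex_eq_iff)
  have L0: "L \<noteq> 0" using s Le by simp
  have A0: "(of_real A :: complex) \<noteq> 0" using A by simp
  define \<kappa> where "\<kappa> = L / of_real A"
  have k0: "\<kappa> \<noteq> 0" unfolding \<kappa>_def using L0 A0 by simp
  define \<alpha> where "\<alpha> = (\<theta> - pi) * A / (2 * s)"
  define \<beta> where "\<beta> = \<theta> * A / (2 * s)"
  define \<Omega> where "\<Omega> = {w. \<alpha> < Re w} \<inter> {w. Re w < \<beta>}"
  define D where "D = (\<lambda>w. lam - cnj lam * exp (\<kappa> * w))"
  define E where "E = (\<lambda>w. cnj u * (exp (\<kappa> * w) - 1) / D w)"
  define E' where "E' = (\<lambda>w. cnj u * \<kappa> * exp (\<kappa> * w) * L / (D w)^2)"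
  have uu: "u * cnj u = 1" using u by (simp add: complex_norm_square[symmetric])
  have DE: "D w \<noteq> 0 \<and> norm (exp (\<kappa> * w) - 1) < norm (D w)" if w: "w \<in> \<Omega>" for w
  proof -
    define \<rho> where "\<rho> = exp (Re (\<kappa> * w))"
    define \<eta> where "\<eta> = Im (\<kappa> * w)"
    have rho: "\<rho> > 0" unfolding \<rho>_def by simp
    have mu: "exp (\<kappa> * w) = of_real \<rho> * cis \<eta>" unfolding \<rho>_def \<eta>_def
      by (simp add: exp_eq_polar)
    have eta: "\<eta> = 2 * s * Re w / A" unfolding \<eta>_def \<kappa>_def Le using A by simp
    have "\<alpha> < Re w" "Re w < \<beta>" using w unfolding \<Omega>_def by auto
    hence "\<theta> - pi < \<eta>" "\<eta> < \<theta>" unfolding eta \<alpha>_def \<beta>_def using s A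
      by (auto simp: field_simps)
    hence "sin (\<eta> - \<theta>) < 0" by (intro sin_neg_of_range) auto
    hence "4 * \<rho> * sin \<theta> * sin (\<eta> - \<theta>) < 0" using rho sth s
      by (simp add: mult_pos_neg)
    hence "(norm (exp (\<kappa> * w) - 1))^2 < (norm (exp (\<kappa> * w) - lam^2))^2"
      using trig_diff[of \<rho> \<eta> \<theta>] unfolding mu lam2 by simp
    hence lt: "norm (exp (\<kappa> * w) - 1) < norm (exp (\<kappa> * w) - lam^2)"
      using sq_less_iff_nonneg by (metis norm_ge_zero)
    have "D w = cnj lam * (lam^2 - exp (\<kappa> * w))" unfolding D_def using ll
      by (simp add: algebra_simps power2_eq_square mult.assoc[symmetric])
    hence "norm (D w) = norm (exp (\<kappa> * w) - lam^2)" using lam by (simp add: norm_mult norm_minus_commute)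
    thus ?thesis using lt by auto
  qed
  show ?thesis
  proof (rule assembly[OF u holH holG H0 G0 sp, of \<Omega> E E'])
    show "open \<Omega>" unfolding \<Omega>_def by (intro open_Int open_halfspace_Re_lt open_halfspace_Re_gt)
    show "convex \<Omega>" unfolding \<Omega>_def by (intro convex_Int convex_halfspace_Re_lt convex_halfspace_Re_gt)
    show "\<And>w s. w \<in> \<Omega> \<Longrightarrow> w + \<i> * of_real s \<in> \<Omega>" unfolding \<Omega>_def by simp
    show "0 \<in> \<Omega>" unfolding \<Omega>_def \<alpha>_def \<beta>_def using th s A
      by (auto simp: divide_neg_pos mult_neg_pos)
    show "E 0 = 0" unfolding E_def by simp
    fix w assume w: "w \<in> \<Omega>"
    have Dw: "D w \<noteq> 0" using DE[OF w] by blast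
    show "(E has_field_derivative E' w) (at w)"
    proof -
      have "(E has_field_derivative
          cnj u * ((\<kappa> * exp (\<kappa> * w)) * D w - (exp (\<kappa> * w) - 1) * (- cnj lam * (\<kappa> * exp (\<kappa> * w)))) / (D w * D w)) (at w)"
        unfolding E_def D_def using Dw unfolding D_def
        by (auto intro!: derivative_eq_intros simp: field_simps)
      moreover have "cnj u * ((\<kappa> * exp (\<kappa> * w)) * D w - (exp (\<kappa> * w) - 1) * (- cnj lam * (\<kappa> * exp (\<kappa> * w)))) / (D w * D w) = E' w"
        unfolding E'_def D_def L_def by (simp add: power2_eq_square algebra_simps)
      ultimately show ?thesis by simp
    qed
    show Ein: "E w \<in> ball 0 1"
      using DE[OF w] u unfolding E_def by (simp add: norm_mult norm_divide divide_less_eq)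
    define \<mu> where "\<mu> = exp (\<kappa> * w)"
    have mu0: "\<mu> \<noteq> 0" unfolding \<mu>_def by simp
    have Dm: "lam - cnj lam * \<mu> \<noteq> 0" using Dw unfolding D_def \<mu>_def .
    define \<zeta> where "\<zeta> = (\<mu> - 1) / (lam - cnj lam * \<mu>)"
    have uE: "u * E w = \<zeta>" unfolding E_def \<zeta>_def D_def \<mu>_def using uu
      by (simp add: mult.assoc[symmetric])
    have f1: "1 + lam * \<zeta> = \<mu> * L / (lam - cnj lam * \<mu>)" unfolding \<zeta>_def L_def using Dm
      by (simp add: field_simps)
    have f2: "1 + cnj lam * \<zeta> = L / (lam - cnj lam * \<mu>)" unfolding \<zeta>_def L_def using Dm
      by (simp add: field_simps)
    have "E' w * (u * (deriv H (E w) + cnj u ^ 2 * deriv G (E w)))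
        = E' w * (u * (of_real A / ((1 + lam * (u * E w)) * (1 + cnj lam * (u * E w)))))"
      using eqn[OF Ein] by (simp add: mult.assoc)
    also have "\<dots> = E' w * (u * (of_real A / ((\<mu> * L / (lam - cnj lam * \<mu>)) * (L / (lam - cnj lam * \<mu>)))))"
      unfolding uE f1 f2 ..
    also have "\<dots> = (cnj u * u) * (\<kappa> * of_real A / L)"
      unfolding E'_def D_def \<mu>_def[symmetric] using alg1[OF Dm mu0 L0] by simp
    also have "\<dots> = 1" using uu L0 A0 unfolding \<kappa>_def by (simp add: mult.commute)
    finally show "E' w * (u * (deriv H (E w) + cnj u ^ 2 * deriv G (E w))) = 1" .
  next
    fix z :: complex assume z: "z \<in> ball 0 1"
    define \<zeta> where "\<zeta> = u * z"
    have z1: "norm \<zeta> < 1" using z u unfolding \<zeta>_def by (simp add: norm_mult)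
    have d1: "1 + lam * \<zeta> \<noteq> 0"
    proof
      assume "1 + lam * \<zeta> = 0" hence "lam * \<zeta> = -1" by (simp add: add_eq_0_iff)
      hence "norm (lam * \<zeta>) = 1" by simp
      thus False using z1 lam by (simp add: norm_mult)
    qed
    have d2: "1 + cnj lam * \<zeta> \<noteq> 0"
    proof
      assume "1 + cnj lam * \<zeta> = 0" hence "cnj lam * \<zeta> = -1" by (simp add: add_eq_0_iff)
      hence "norm (cnj lam * \<zeta>) = 1" by simp
      thus False using z1 lam by (simp add: norm_mult)
    qed
    define M where "M = (1 + lam * \<zeta>) / (1 + cnj lam * \<zeta>)"
    have M0: "M \<noteq> 0" unfolding M_def using d1 d2 by simp
    define w where "w = Ln M / \<kappa>"
    have ew: "exp (\<kappa> * w) = M" unfolding w_def using k0 M0 by simp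
    have M1: "M - 1 = L * \<zeta> / (1 + cnj lam * \<zeta>)" unfolding M_def L_def using d2
      by (simp add: field_simps)
    have M2: "lam - cnj lam * M = L / (1 + cnj lam * \<zeta>)" unfolding M_def L_def using d2 ll
      by (simp add: field_simps)
    have M3: "M - lam^2 = - lam * L / (1 + cnj lam * \<zeta>)" unfolding M_def L_def using d2 ll
      by (simp add: field_simps power2_eq_square)
    have Ew: "E w = z"
    proof -
      have "E w = cnj u * (M - 1) / (lam - cnj lam * M)" unfolding E_def D_def ew ..
      also have "\<dots> = cnj u * \<zeta>" unfolding M1 M2 using d2 L0 by simp
      also have "\<dots> = z" unfolding \<zeta>_def using uu by (simp add: mult.assoc[symmetric] mult.commute[of "cnj u"])
      finally show ?thesis .
    qed
    have wO: "w \<in> \<Omega>"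
    proof -
      have lt: "norm (M - 1) < norm (M - lam^2)"
        unfolding M1 M3 using z1 L0 d2 lam by (simp add: norm_mult norm_divide divide_strict_right_mono)
      define a where "a = Arg M"
      have Mp: "M = of_real (norm M) * cis a" using rcis_cmod_Arg[of M] unfolding a_def by (simp add: rcis_def)
      have "(norm (M - 1))^2 < (norm (M - lam^2))^2"
        using lt by (simp add: power_strict_mono)
      hence "4 * norm M * sin \<theta> * sin (a - \<theta>) < 0"
        using trig_diff[of "norm M" a \<theta>] unfolding lam2 by (subst (asm) (1 2) Mp) simp
      moreover have pos4: "4 * norm M * sin \<theta> > 0" using M0 sth s by simp
      ultimately have "sin (a - \<theta>) < 0"
        using mult_nonneg_nonneg[of "4 * norm M * sin \<theta>" "sin (a - \<theta>)"] by linarith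
      moreover have "- pi < a" "a \<le> pi" using Arg_bounded[of M] unfolding a_def by auto
      ultimately have ar: "- pi < a - \<theta>" "a - \<theta> < 0" using sin_neg_range[of "a - \<theta>"] th by auto
      have LnM: "Ln M = (of_real (A / (2 * s)) * (of_real a - \<i> * of_real (ln (norm M)))) * \<kappa>"
        unfolding Ln_Arg[OF M0] \<kappa>_def Le a_def using s A
        by (simp add: complex_eq_iff field_simps)
      have "w = of_real (A / (2 * s)) * (of_real a - \<i> * of_real (ln (norm M)))"
        unfolding w_def using k0 by (subst LnM) simp
      hence "Re w = A / (2 * s) * a" by simp
      hence "Re w = a * A / (2 * s)" by simp
      moreover have "A * \<theta> < A * (pi + a)" "A * a < A * \<theta>" using ar A
        by (intro mult_strict_left_mono; simp)+
      ultimately show ?thesis unfolding \<Omega>_def \<alpha>_def \<beta>_def using ar s A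
        by (auto simp: field_simps)
    qed
    show "\<exists>w\<in>\<Omega>. E w = z" using wO Ew by blast
  qed
qed


lemma core_all:
  fixes u lam :: complex and A :: real and H G :: "complex \<Rightarrow> complex"
  assumes u: "norm u = 1" and lam: "norm lam = 1" and A: "A > 0"
    and holH: "H holomorphic_on ball 0 1" and holG: "G holomorphic_on ball 0 1"
    and H0: "H 0 = 0" and G0: "G 0 = 0"
    and sp: "\<And>z. z \<in> ball 0 1 \<Longrightarrow> norm (deriv G z) < norm (deriv H z)"
    and eqn: "\<And>z. z \<in> ball 0 1 \<Longrightarrow> deriv H z + cnj u ^ 2 * deriv G z
        = of_real A / ((1 + lam * u * z) * (1 + cnj lam * u * z))"
  shows "inj_on (harm H G) (ball 0 1) \<and> convex (harm H G ` ball 0 1)"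
proof (cases "Im lam > 0")
  case True
  show ?thesis by (rule core_strip[OF u lam True A holH holG H0 G0 sp eqn])
next
  case False
  show ?thesis
  proof (cases "Im lam < 0")
    case True
    have lam': "norm (cnj lam) = 1" "Im (cnj lam) > 0" using lam True by auto
    have eqn': "deriv H z + cnj u ^ 2 * deriv G z
        = of_real A / ((1 + cnj lam * u * z) * (1 + cnj (cnj lam) * u * z))" if "z \<in> ball 0 1" for z
    proof -
      have "(1 + cnj lam * u * z) * (1 + cnj (cnj lam) * u * z) = (1 + lam * u * z) * (1 + cnj lam * u * z)"
        by (simp add: mult.commute)
      thus ?thesis using eqn[OF that] by simp
    qed
    show ?thesis by (rule core_strip[OF u lam' A holH holG H0 G0 sp eqn'])
  next
    case False2: False
    have im0: "Im lam = 0" using False False2 by simp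
    have "\<bar>Re lam\<bar> = 1" using lam im0 unfolding cmod_def by simp
    hence re: "Re lam = 1 \<or> Re lam = -1" by linarith
    show ?thesis
    proof (cases "Re lam = 1")
      case True
      have "lam = 1" using True im0 by (simp add: complex_eq_iff)
      show ?thesis by (rule core_half[OF u \<open>lam = 1\<close> A holH holG H0 G0 sp eqn])
    next
      case False
      have lm: "lam = -1" using False re im0 by (simp add: complex_eq_iff)
      have u': "norm (- u) = 1" using u by simp
      have eqn': "deriv H z + cnj (- u) ^ 2 * deriv G z
        = of_real A / ((1 + 1 * (- u) * z) * (1 + cnj 1 * (- u) * z))" if "z \<in> ball 0 1" for z
        using eqn[OF that] lm by simp
      show ?thesis by (rule core_half[OF u' refl A holH holG H0 G0 sp eqn'])
    qed
  qed
qed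

theorem theorem3:
  fixes a lam \<delta> :: complex and H G :: "complex \<Rightarrow> complex"
  assumes "norm lam = 1" and "norm \<delta> = 1" and "norm a < 1"
    and "family_F a lam \<delta> H G"
    and "locally_univalent_sense_preserving H G"
  shows "inj_on (harm H G) (ball 0 1) \<and> convex (harm H G ` ball 0 1)"
proof -
  define \<gamma> where "\<gamma> = Arg (1 + cnj a)"
  define u where "u = \<delta> * exp (\<i> * of_real \<gamma>)"
  define A where "A = norm (1 + a)"
  have cls: "in_class_H H G" and eq0: "\<forall>z\<in>ball 0 1. deriv H z + cnj (\<delta>^2) * exp (- 2 * \<i> * of_real \<gamma>) * deriv G z =
        of_real (1 + (norm (1 + a) - 1)) /
          ((1 + lam * \<delta> * exp (\<i> * of_real \<gamma>) * z) * (1 + cnj lam * \<delta> * exp (\<i> * of_real \<gamma>) * z))"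
    using assms(4) unfolding family_F_def Let_def \<gamma>_def by auto
  have u: "norm u = 1" unfolding u_def using assms(2) by (simp add: norm_mult)
  have A: "A > 0"
  proof -
    have "1 + a \<noteq> 0"
    proof
      assume "1 + a = 0" hence "a = -1" by (simp add: add_eq_0_iff)
      thus False using assms(3) by simp
    qed
    thus ?thesis unfolding A_def by simp
  qed
  have cu: "cnj u ^ 2 = cnj (\<delta>^2) * exp (- 2 * \<i> * of_real \<gamma>)"
  proof -
    have "cnj u = cnj \<delta> * exp (- (\<i> * of_real \<gamma>))" unfolding u_def by (simp add: exp_cnj)
    hence "cnj u ^ 2 = cnj \<delta> ^ 2 * exp (- (\<i> * of_real \<gamma>)) ^ 2" by (simp add: power_mult_distrib)
    also have "exp (- (\<i> * of_real \<gamma>)) ^ 2 = exp (- 2 * \<i> * of_real \<gamma>)"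
      by (simp add: exp_of_nat_mult[symmetric] mult.assoc)
    finally show ?thesis by simp
  qed
  have eqn: "deriv H z + cnj u ^ 2 * deriv G z
        = of_real A / ((1 + lam * u * z) * (1 + cnj lam * u * z))" if "z \<in> ball 0 1" for z
    unfolding cu using eq0 that by (simp add: A_def u_def mult.assoc)
  show ?thesis
    using core_all[OF u assms(1) A, of H G] cls assms(5) eqn
    unfolding in_class_H_def locally_univalent_sense_preserving_def by blast
qed

end
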